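(* Let $n\ge1$ and $1\le r\le n$ be integers, let $f:\mathbb{I}_n^r\to\mathbb{R}^+$ be an arbitrary function, and let $X$ be a real number with $X>\max_{J,J'\in\mathbb{I}_n^r}|f(J)-f(J')|$. Then the function $\tilde f:\mathbb{I}_n^r\to\mathbb{R}^+$ defined by $\tilde f(J)=|J|(n-|J|)X+|J|f(J)$ is graded.
   Context: $\mathbb{R}^+$ denotes the positive reals. For integers $i\le j$, $[i:j]=\{i,\dots,j\}$. For integers $r\le n$, $\mathbb{I}_n^r=\{[i:j]:1\le i\le j\le n,\ j<i+r\}$. A function $f:\mathbb{I}_n^r\to\mathbb{R}^+$ is graded if for all $J,J'\in\mathbb{I}_n^r$ with $|J|<|J'|$ one has $f(J)/|J|>f(J')/|J'|$. *)

theory Defs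
  imports "HOL-Analysis.Analysis"
begin

text \<open>An interval [i:j] of integers is represented by the pair (i,j) of naturals.\<close>

definition intervals :: "nat \<Rightarrow> nat \<Rightarrow> (nat \<times> nat) set" where
  "intervals n r = {(i, j). 1 \<le> i \<and> i \<le> j \<and> j \<le> n \<and> j < i + r}"

definition ilen :: "nat \<times> nat \<Rightarrow> nat" where
  "ilen J = card {fst J..snd J}"

definition graded :: "nat \<Rightarrow> nat \<Rightarrow> (nat \<times> nat \<Rightarrow> real) \<Rightarrow> bool" where
  "graded n r f \<longleftrightarrow> (\<forall>J\<in>intervals n r. \<forall>J'\<in>intervals n r.
      ilen J < ilen J' \<longrightarrow> f J / real (ilen J) > f J' / real (ilen J'))"

end

theory Submission
  imports Defs
begin

lemma ilen_props: "J \<in> intervals n r \<Longrightarrow> 1 \<le> ilen J \<and> ilen J \<le> n"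
  by (cases J) (auto simp: intervals_def ilen_def)

theorem lemma6p4:
  fixes n r :: nat and f :: "nat \<times> nat \<Rightarrow> real" and X :: real
  assumes "1 \<le> n" and "1 \<le> r" and "r \<le> n"
    and "\<forall>J\<in>intervals n r. f J > 0"
    and "\<forall>J\<in>intervals n r. \<forall>J'\<in>intervals n r. X > \<bar>f J - f J'\<bar>"
  shows "(\<forall>J\<in>intervals n r.
            real (ilen J) * real (n - ilen J) * X + real (ilen J) * f J > 0)
       \<and> graded n r (\<lambda>J. real (ilen J) * real (n - ilen J) * X + real (ilen J) * f J)"
proof
  show "\<forall>J\<in>intervals n r.
            real (ilen J) * real (n - ilen J) * X + real (ilen J) * f J > 0"
  proof
    fix J assume J: "J \<in> intervals n r"
    have X: "X > 0" using assms(5) J by (metis abs_ge_zero order_le_less_trans)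
    have l: "1 \<le> ilen J" using ilen_props[OF J] by simp
    have "real (ilen J) * real (n - ilen J) * X \<ge> 0" using X by simp
    moreover have "real (ilen J) * f J > 0" using l assms(4) J by simp
    ultimately show "real (ilen J) * real (n - ilen J) * X + real (ilen J) * f J > 0" by linarith
  qed
next
  show "graded n r (\<lambda>J. real (ilen J) * real (n - ilen J) * X + real (ilen J) * f J)"
    unfolding graded_def
  proof (intro ballI impI)
    fix J J' assume J: "J \<in> intervals n r" and J': "J' \<in> intervals n r"
      and lt: "ilen J < ilen J'"
    have X: "X > 0" using assms(5) J by (metis abs_ge_zero order_le_less_trans)
    obtain a where a: "a = ilen J" by simp
    obtain b where b: "b = ilen J'" by simp
    have ha: "1 \<le> a" "a \<le> n" using ilen_props[OF J] a by auto
    have hb: "1 \<le> b" "b \<le> n" using ilen_props[OF J'] b by auto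
    have ab: "a < b" using lt a b by simp
    have d: "\<bar>f J - f J'\<bar> < X" using assms(5) J J' by auto
    have e1: "(real a * real (n - a) * X + real a * f J) / real a = real (n - a) * X + f J"
      using ha by (simp add: field_simps)
    have e2: "(real b * real (n - b) * X + real b * f J') / real b = real (n - b) * X + f J'"
      using hb by (simp add: field_simps)
    have "real (n - a) = real (n - b) + real (b - a)" using ab hb by simp
    moreover have "(real b - real a) * X \<ge> X" using ab X by simp
    moreover have "real (b - a) = real b - real a" using ab by simp
    ultimately have "real (n - a) * X + f J > real (n - b) * X + f J'" using d
      by (simp only: distrib_right)
    then show "(real (ilen J) * real (n - ilen J) * X + real (ilen J) * f J) / real (ilen J)
         > (real (ilen J') * real (n - ilen J') * X + real (ilen J') * f J') / real (ilen J')"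
      using e1 e2 a b by simp
  qed
qed

end
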